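(* For every positive integer $\gamma$ there exists a tree $T$ with domination number $\gamma$ such that $\Gamma(T)>\frac{2}{5}\sqrt5^{\,\gamma}$.
   Context: For a graph $G$, a set $D\subseteq V(G)$ is dominating if every vertex of $G$ lies in $D$ or has a neighbour in $D$. The domination number $\gamma(G)$ is the minimum size of a dominating set; $\Gamma(G)$ denotes the number of dominating sets of $G$ of size $\gamma(G)$. *)

theory Defs
  imports Complex_Main
begin

definition simple_graph :: "'a set \<Rightarrow> 'a set set \<Rightarrow> bool" where
  "simple_graph V E \<longleftrightarrow> finite V \<and> (\<forall>e\<in>E. e \<subseteq> V \<and> card e = 2)"

definition adj :: "'a set set \<Rightarrow> 'a \<Rightarrow> 'a \<Rightarrow> bool" where
  "adj E u v \<longleftrightarrow> {u, v} \<in> E"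

definition walk :: "'a set \<Rightarrow> 'a set set \<Rightarrow> 'a list \<Rightarrow> bool" where
  "walk V E xs \<longleftrightarrow> xs \<noteq> [] \<and> set xs \<subseteq> V \<and>
     (\<forall>i. Suc i < length xs \<longrightarrow> adj E (xs ! i) (xs ! Suc i))"

definition connected_graph :: "'a set \<Rightarrow> 'a set set \<Rightarrow> bool" where
  "connected_graph V E \<longleftrightarrow>
     (\<forall>u\<in>V. \<forall>v\<in>V. \<exists>xs. walk V E xs \<and> hd xs = u \<and> last xs = v)"

definition is_cycle :: "'a set \<Rightarrow> 'a set set \<Rightarrow> 'a list \<Rightarrow> bool" where
  "is_cycle V E xs \<longleftrightarrow> length xs \<ge> 3 \<and> distinct xs \<and> walk V E xs \<and>
     adj E (last xs) (hd xs)"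

definition acyclic_graph :: "'a set \<Rightarrow> 'a set set \<Rightarrow> bool" where
  "acyclic_graph V E \<longleftrightarrow> (\<nexists>xs. is_cycle V E xs)"

definition is_tree :: "'a set \<Rightarrow> 'a set set \<Rightarrow> bool" where
  "is_tree V E \<longleftrightarrow> simple_graph V E \<and> V \<noteq> {} \<and> connected_graph V E \<and> acyclic_graph V E"

definition dominating :: "'a set \<Rightarrow> 'a set set \<Rightarrow> 'a set \<Rightarrow> bool" where
  "dominating V E D \<longleftrightarrow> D \<subseteq> V \<and> (\<forall>v\<in>V. v \<in> D \<or> (\<exists>u\<in>D. adj E v u))"

definition domination_number :: "'a set \<Rightarrow> 'a set set \<Rightarrow> nat" where
  "domination_number V E = (LEAST k. \<exists>D. dominating V E D \<and> card D = k)"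

definition num_min_dominating :: "'a set \<Rightarrow> 'a set set \<Rightarrow> nat" where
  "num_min_dominating V E =
     card {D. dominating V E D \<and> card D = domination_number V E}"

end

theory Submission
  imports Defs
begin


lemma adj_sym: "adj E a b = adj E b a" by (simp add: adj_def insert_commute)

lemma walk_mono: "walk V E xs \<Longrightarrow> V \<subseteq> V' \<Longrightarrow> E \<subseteq> E' \<Longrightarrow> walk V' E' xs"
  by (auto simp: walk_def adj_def)

lemma walk_Cons:
  assumes "walk V E xs" "v \<in> V" "adj E v (hd xs)"
  shows "walk V E (v # xs)"
  unfolding walk_def
proof (intro conjI allI impI)
  show "v # xs \<noteq> []" by simp
  show "set (v # xs) \<subseteq> V" using assms by (auto simp: walk_def)
  fix i assume i: "Suc i < length (v # xs)"
  show "adj E ((v # xs) ! i) ((v # xs) ! Suc i)"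
  proof (cases i)
    case 0 then show ?thesis using assms by (auto simp: walk_def hd_conv_nth)
  next
    case (Suc j) then show ?thesis using assms i by (auto simp: walk_def)
  qed
qed

lemma walk_snoc:
  assumes "walk V E xs" "v \<in> V" "adj E (last xs) v"
  shows "walk V E (xs @ [v])"
  unfolding walk_def
proof (intro conjI allI impI)
  show "xs @ [v] \<noteq> []" by simp
  show "set (xs @ [v]) \<subseteq> V" using assms by (auto simp: walk_def)
  fix i assume i: "Suc i < length (xs @ [v])"
  show "adj E ((xs @ [v]) ! i) ((xs @ [v]) ! Suc i)"
  proof (cases "Suc i < length xs")
    case True then show ?thesis using assms by (auto simp: walk_def nth_append)
  next
    case False
    then have "Suc i = length xs" using i by simp
    moreover have "xs \<noteq> []" using assms by (simp add: walk_def)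
    moreover have "i = length xs - 1" using \<open>Suc i = length xs\<close> by simp
    ultimately show ?thesis using assms by (auto simp: nth_append last_conv_nth)
  qed
qed

lemma tree_single: "is_tree {a} {}"
  unfolding is_tree_def simple_graph_def connected_graph_def acyclic_graph_def is_cycle_def
proof (intro conjI)
  show "\<forall>u\<in>{a}. \<forall>v\<in>{a}. \<exists>xs. walk {a} {} xs \<and> hd xs = u \<and> last xs = v"
    by (auto intro!: exI[of _ "[a]"] simp: walk_def)
  show "\<nexists>xs. 3 \<le> length xs \<and> distinct xs \<and> walk {a} {} xs \<and> adj {} (last xs) (hd xs)"
    by (auto simp: adj_def)
qed auto

lemma tree_add_leaf:
  assumes T: "is_tree V E" and u: "u \<in> V" and v: "v \<notin> V"
  shows "is_tree (insert v V) (insert {u,v} E)"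
proof -
  have sg: "simple_graph V E" and ne: "V \<noteq> {}" and con: "connected_graph V E"
    and ac: "acyclic_graph V E" using T by (auto simp: is_tree_def)
  have Esub: "\<forall>e\<in>E. e \<subseteq> V" using sg by (simp add: simple_graph_def)
  have uv: "u \<noteq> v" using u v by auto
  let ?V = "insert v V" and ?E = "insert {u,v} E"
  have sg': "simple_graph ?V ?E"
    using sg uv u by (auto simp: simple_graph_def)
  have nb: "w = u" if "adj ?E v w" for w
  proof -
    have "{v,w} \<in> ?E" using that by (simp add: adj_def)
    moreover have "{v,w} \<notin> E" using Esub v by auto
    ultimately have "{v,w} = {u,v}" by simp
    then show ?thesis using uv by (auto simp: doubleton_eq_iff)
  qed
  have con': "connected_graph ?V ?E"
    unfolding connected_graph_def
  proof (intro ballI)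
    fix a b assume a: "a \<in> ?V" and b: "b \<in> ?V"
    have wm: "walk V E xs \<Longrightarrow> walk ?V ?E xs" for xs by (erule walk_mono) auto
    have adjuv: "adj ?E u v" "adj ?E v u" by (auto simp: adj_def insert_commute)
    show "\<exists>xs. walk ?V ?E xs \<and> hd xs = a \<and> last xs = b"
    proof (cases "a = v")
      case av: True
      show ?thesis
      proof (cases "b = v")
        case True then show ?thesis using av by (auto intro!: exI[of _ "[v]"] simp: walk_def)
      next
        case False
        then have "b \<in> V" using b by simp
        then obtain xs where xs: "walk V E xs" "hd xs = u" "last xs = b"
          using con u by (auto simp: connected_graph_def)
        have "walk ?V ?E (v # xs)" using walk_Cons[OF wm[OF xs(1)]] adjuv xs by auto
        moreover have "xs \<noteq> []" using xs by (simp add: walk_def)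
        ultimately show ?thesis using xs av by (intro exI[of _ "v # xs"]) auto
      qed
    next
      case anv: False
      then have aV: "a \<in> V" using a by simp
      show ?thesis
      proof (cases "b = v")
        case True
        obtain xs where xs: "walk V E xs" "hd xs = a" "last xs = u"
          using con u aV by (auto simp: connected_graph_def)
        have "walk ?V ?E (xs @ [v])" using walk_snoc[OF wm[OF xs(1)]] adjuv xs by auto
        moreover have "xs \<noteq> []" using xs by (simp add: walk_def)
        ultimately show ?thesis using xs True by (intro exI[of _ "xs @ [v]"]) auto
      next
        case False
        then have "b \<in> V" using b by simp
        then obtain xs where xs: "walk V E xs" "hd xs = a" "last xs = b"
          using con aV by (auto simp: connected_graph_def)
        then show ?thesis using wm by blast
      qed
    qed
  qed
  have ac': "acyclic_graph ?V ?E"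
    unfolding acyclic_graph_def
  proof
    assume "\<exists>xs. is_cycle ?V ?E xs"
    then obtain xs where c: "is_cycle ?V ?E xs" by blast
    let ?n = "length xs"
    have n3: "3 \<le> ?n" and dist: "distinct xs" and w: "walk ?V ?E xs"
      and cl: "adj ?E (last xs) (hd xs)" using c by (auto simp: is_cycle_def)
    show False
    proof (cases "v \<in> set xs")
      case False
      have ad: "adj E a b" if "adj ?E a b" "a \<in> set xs" "b \<in> set xs" for a b
      proof -
        have "{a,b} \<noteq> {u,v}" using that False by (auto simp: doubleton_eq_iff)
        then show ?thesis using that by (simp add: adj_def)
      qed
      have ne: "xs \<noteq> []" using n3 by auto
      have "walk V E xs"
        unfolding walk_def
      proof (intro conjI allI impI)
        show "xs \<noteq> []" by fact
        show "set xs \<subseteq> V" using w False by (auto simp: walk_def)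
        fix i assume "Suc i < length xs"
        then show "adj E (xs ! i) (xs ! Suc i)" using w ad by (simp add: walk_def)
      qed
      moreover have "adj E (last xs) (hd xs)" using ad cl ne by simp
      ultimately have "is_cycle V E xs" using n3 dist by (simp add: is_cycle_def)
      then show False using ac by (auto simp: acyclic_graph_def)
    next
      case True
      then obtain i where i: "i < ?n" "xs ! i = v" by (auto simp: in_set_conv_nth)
      have step: "adj ?E (xs ! j) (xs ! (if j = ?n - 1 then 0 else Suc j))" if "j < ?n" for j
      proof (cases "j = ?n - 1")
        case True
        have "xs \<noteq> []" using n3 by auto
        then show ?thesis using cl True by (simp add: last_conv_nth hd_conv_nth)
      next
        case False
        then have "Suc j < ?n" using that by simp
        then show ?thesis using w False by (simp add: walk_def)
      qed
      define pr where "pr = (if i = 0 then ?n - 1 else i - 1)"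
      define nx where "nx = (if i = ?n - 1 then 0 else Suc i)"
      have prn: "pr < ?n" and nxn: "nx < ?n" using i n3 by (auto simp: pr_def nx_def)
      have "(if pr = ?n - 1 then 0 else Suc pr) = i" using i n3 by (auto simp: pr_def)
      then have "adj ?E (xs ! pr) v" using step[OF prn] i by simp
      then have p1: "xs ! pr = u" using nb adj_sym by metis
      have "adj ?E v (xs ! nx)" using step[OF i(1)] i by (simp add: nx_def)
      then have p2: "xs ! nx = u" using nb by blast
      have "pr \<noteq> nx" using i n3 by (auto simp: pr_def nx_def)
      then show False using p1 p2 dist prn nxn nth_eq_iff_index_eq by metis
    qed
  qed
  show ?thesis using sg' con' ac' by (simp add: is_tree_def)
qed



definition domset :: "'a set set \<Rightarrow> 'a set \<Rightarrow> 'a set \<Rightarrow> bool" where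
  "domset E S A \<longleftrightarrow> (\<forall>v\<in>S. v \<in> A \<or> (\<exists>u\<in>A. adj E v u))"

definition Qinv :: "'a set \<Rightarrow> 'a set set \<Rightarrow> 'a \<Rightarrow> nat \<Rightarrow> nat \<Rightarrow> bool" where
  "Qinv V E r g cnt \<longleftrightarrow> simple_graph V E \<and> r \<in> V \<and>
     (\<forall>A\<in>Pow V. domset E (V - {r}) A \<longrightarrow> g \<le> card A) \<and>
     (\<forall>A\<in>Pow V. domset E (V - {r}) A \<and> card A = g \<longrightarrow> r \<in> A) \<and>
     card {A\<in>Pow V. domset E (V - {r}) A \<and> card A = g} = cnt \<and> cnt > 0"

lemma dominating_iff: "dominating V E D \<longleftrightarrow> D \<in> Pow V \<and> domset E V D"
  by (auto simp: dominating_def domset_def)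

lemma dom_number_by:
  assumes low: "\<forall>D\<in>Pow V. dominating V E D \<longrightarrow> g \<le> card D"
    and ex: "\<exists>D. dominating V E D \<and> card D = g"
  shows "domination_number V E = g"
  unfolding domination_number_def
proof (rule Least_equality)
  show "\<exists>D. dominating V E D \<and> card D = g" by fact
  fix y assume "\<exists>D. dominating V E D \<and> card D = y"
  then obtain D where D: "dominating V E D" "card D = y" by blast
  then have "D \<in> Pow V" by (simp add: dominating_def)
  then show "g \<le> y" using low D by blast
qed

lemma Qinv_result:
  assumes Q: "Qinv V E r g cnt"
  shows "domination_number V E = g \<and> num_min_dominating V E = cnt"
proof -
  have sg: "simple_graph V E" and r: "r \<in> V"
    and low: "\<forall>A\<in>Pow V. domset E (V - {r}) A \<longrightarrow> g \<le> card A"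
    and rin: "\<forall>A\<in>Pow V. domset E (V - {r}) A \<and> card A = g \<longrightarrow> r \<in> A"
    and c: "card {A\<in>Pow V. domset E (V - {r}) A \<and> card A = g} = cnt" and cp: "cnt > 0"
    using Q by (auto simp: Qinv_def)
  have sub: "domset E V A \<Longrightarrow> domset E (V - {r}) A" for A by (auto simp: domset_def)
  have sup: "domset E (V - {r}) A \<Longrightarrow> r \<in> A \<Longrightarrow> domset E V A" for A
    by (auto simp: domset_def)
  have eq: "{D. dominating V E D \<and> card D = g} = {A\<in>Pow V. domset E (V - {r}) A \<and> card A = g}"
  proof (intro set_eqI iffI)
    fix D assume "D \<in> {D. dominating V E D \<and> card D = g}"
    then show "D \<in> {A\<in>Pow V. domset E (V - {r}) A \<and> card A = g}"
      using sub unfolding dominating_iff by blast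
  next
    fix D assume D: "D \<in> {A\<in>Pow V. domset E (V - {r}) A \<and> card A = g}"
    then have "r \<in> D" using rin by blast
    then show "D \<in> {D. dominating V E D \<and> card D = g}"
      using sup D unfolding dominating_iff by blast
  qed
  have "{A\<in>Pow V. domset E (V - {r}) A \<and> card A = g} \<noteq> {}"
  proof
    assume "{A\<in>Pow V. domset E (V - {r}) A \<and> card A = g} = {}"
    then have "cnt = 0" using c by (metis card.empty)
    then show False using cp by simp
  qed
  then obtain A where "A \<in> {A\<in>Pow V. domset E (V - {r}) A \<and> card A = g}" by blast
  then have "A \<in> {D. dominating V E D \<and> card D = g}" using eq by simp
  then have ex: "\<exists>D. dominating V E D \<and> card D = g" by blast
  have "domination_number V E = g"
  proof (rule dom_number_by[OF _ ex], intro ballI impI)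
    fix D assume "D \<in> Pow V" "dominating V E D"
    then show "g \<le> card D" using low sub unfolding dominating_iff by blast
  qed
  moreover have "num_min_dominating V E = cnt" unfolding num_min_dominating_def
    using calculation eq c by simp
  ultimately show ?thesis by blast
qed

lemma Qinv_attach:
  assumes Q: "Qinv V E r g cnt"
  and Wf: "finite W" and WV: "W \<inter> V = {}" and xW: "x \<in> W"
  and F: "\<forall>e\<in>F. e \<subseteq> W \<and> card e = 2"
  and lowB: "\<forall>B\<in>Pow W. domset F (W - {x}) B \<longrightarrow> m \<le> card B"
  and cB: "card {B\<in>Pow W. domset F (W - {x}) B \<and> card B = m} = c" and cp: "c > 0"
  shows "Qinv (V \<union> W) (insert {r,x} (E \<union> F)) r (g+m) (cnt*c)"
proof -
  have sg: "simple_graph V E" and r: "r \<in> V"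
    and low: "\<forall>A\<in>Pow V. domset E (V - {r}) A \<longrightarrow> g \<le> card A"
    and rin: "\<forall>A\<in>Pow V. domset E (V - {r}) A \<and> card A = g \<longrightarrow> r \<in> A"
    and c: "card {A\<in>Pow V. domset E (V - {r}) A \<and> card A = g} = cnt" and cntp: "cnt > 0"
    using Q by (auto simp: Qinv_def)
  have Vf: "finite V" and Esub: "\<forall>e\<in>E. e \<subseteq> V \<and> card e = 2" using sg by (auto simp: simple_graph_def)
  have rx: "r \<noteq> x" using r xW WV by auto
  let ?V = "V \<union> W" and ?E = "insert {r,x} (E \<union> F)"
  have sg': "simple_graph ?V ?E" using Vf Wf Esub F rx r xW by (auto simp: simple_graph_def)
  have splitA: "domset E (V - {r}) (A' \<inter> V)"
    if "A' \<in> Pow ?V" "domset ?E (?V - {r}) A'" for A'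
    unfolding domset_def
  proof
    fix v assume v: "v \<in> V - {r}"
    then have "v \<in> A' \<or> (\<exists>u\<in>A'. adj ?E v u)" using that by (auto simp: domset_def)
    then show "v \<in> A' \<inter> V \<or> (\<exists>u\<in>A' \<inter> V. adj E v u)"
    proof
      assume "v \<in> A'" then show ?thesis using v by auto
    next
      assume "\<exists>u\<in>A'. adj ?E v u"
      then obtain u where u: "u \<in> A'" "{v,u} \<in> ?E" by (auto simp: adj_def)
      have "{v,u} \<noteq> {r,x}" using v xW WV by (auto simp: doubleton_eq_iff)
      moreover have "{v,u} \<notin> F" using F v WV by blast
      ultimately have "{v,u} \<in> E" using u by auto
      then have "u \<in> V" using Esub by auto
      then show ?thesis using u \<open>{v,u} \<in> E\<close> by (auto simp: adj_def)
    qed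
  qed
  have splitB: "domset F (W - {x}) (A' \<inter> W)"
    if "A' \<in> Pow ?V" "domset ?E (?V - {r}) A'" for A'
    unfolding domset_def
  proof
    fix v assume v: "v \<in> W - {x}"
    then have "v \<noteq> r" using r WV by auto
    then have "v \<in> A' \<or> (\<exists>u\<in>A'. adj ?E v u)" using that v by (auto simp: domset_def)
    then show "v \<in> A' \<inter> W \<or> (\<exists>u\<in>A' \<inter> W. adj F v u)"
    proof
      assume "v \<in> A'" then show ?thesis using v by auto
    next
      assume "\<exists>u\<in>A'. adj ?E v u"
      then obtain u where u: "u \<in> A'" "{v,u} \<in> ?E" by (auto simp: adj_def)
      have "{v,u} \<noteq> {r,x}" using v \<open>v \<noteq> r\<close> by (auto simp: doubleton_eq_iff)
      moreover have "{v,u} \<notin> E" using Esub v WV by blast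
      ultimately have "{v,u} \<in> F" using u by auto
      then have "u \<in> W" using F by auto
      then show ?thesis using u \<open>{v,u} \<in> F\<close> by (auto simp: adj_def)
    qed
  qed
  have join: "domset ?E (?V - {r}) (A \<union> B)"
    if "A \<in> Pow V" "B \<in> Pow W" "domset E (V - {r}) A" "domset F (W - {x}) B" "r \<in> A" for A B
    unfolding domset_def
  proof
    fix v assume v: "v \<in> ?V - {r}"
    show "v \<in> A \<union> B \<or> (\<exists>u\<in>A \<union> B. adj ?E v u)"
    proof (cases "v \<in> V")
      case True
      then have "v \<in> A \<or> (\<exists>u\<in>A. adj E v u)" using that v by (auto simp: domset_def)
      then show ?thesis by (auto simp: adj_def)
    next
      case False
      then have vW: "v \<in> W" using v by auto
      show ?thesis
      proof (cases "v = x")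
        case True
        have "adj ?E v r" using True by (simp add: adj_def insert_commute)
        then show ?thesis using that by auto
      next
        case False
        then have "v \<in> B \<or> (\<exists>u\<in>B. adj F v u)" using that vW by (auto simp: domset_def)
        then show ?thesis by (auto simp: adj_def)
      qed
    qed
  qed
  have cardsplit: "card A' = card (A' \<inter> V) + card (A' \<inter> W)" if "A' \<in> Pow ?V" for A'
  proof -
    have un: "(A' \<inter> V) \<union> (A' \<inter> W) = A'" using that by auto
    have "finite A'" using that Vf Wf finite_subset by auto
    then have fV: "finite (A' \<inter> V)" and fW: "finite (A' \<inter> W)" by auto
    have "(A' \<inter> V) \<inter> (A' \<inter> W) = {}" using WV by auto
    from card_Un_disjoint[OF fV fW this] show ?thesis unfolding un .
  qed
  have low': "\<forall>A\<in>Pow ?V. domset ?E (?V - {r}) A \<longrightarrow> g + m \<le> card A"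
  proof (intro ballI impI)
    fix A assume A: "A \<in> Pow ?V" "domset ?E (?V - {r}) A"
    have "g \<le> card (A \<inter> V)" using low splitA[OF A] by auto
    moreover have "m \<le> card (A \<inter> W)" using lowB splitB[OF A] by auto
    ultimately show "g + m \<le> card A" using cardsplit[OF A(1)] by simp
  qed
  have exact: "card (A \<inter> V) = g \<and> card (A \<inter> W) = m"
    if A: "A \<in> Pow ?V" "domset ?E (?V - {r}) A" "card A = g + m" for A
  proof -
    have "g \<le> card (A \<inter> V)" using low splitA[OF A(1,2)] by auto
    moreover have "m \<le> card (A \<inter> W)" using lowB splitB[OF A(1,2)] by auto
    ultimately show ?thesis using cardsplit[OF A(1)] A(3) by simp
  qed
  let ?MA = "{A\<in>Pow V. domset E (V - {r}) A \<and> card A = g}"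
  let ?MB = "{B\<in>Pow W. domset F (W - {x}) B \<and> card B = m}"
  let ?M = "{A\<in>Pow ?V. domset ?E (?V - {r}) A \<and> card A = g + m}"
  have rin': "\<forall>A\<in>Pow ?V. domset ?E (?V - {r}) A \<and> card A = g + m \<longrightarrow> r \<in> A"
  proof (intro ballI impI)
    fix A assume A: "A \<in> Pow ?V" "domset ?E (?V - {r}) A \<and> card A = g + m"
    have "A \<inter> V \<in> Pow V" by simp
    moreover have "domset E (V - {r}) (A \<inter> V)" using splitA A by blast
    moreover have "card (A \<inter> V) = g" using exact A by blast
    ultimately have "r \<in> A \<inter> V" using rin by blast
    then show "r \<in> A" by simp
  qed
  have Meq: "?M = (\<lambda>(A,B). A \<union> B) ` (?MA \<times> ?MB)"
  proof
    show "?M \<subseteq> (\<lambda>(A,B). A \<union> B) ` (?MA \<times> ?MB)"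
    proof
      fix A assume A: "A \<in> ?M"
      then have A1: "A \<in> Pow ?V" "domset ?E (?V - {r}) A" "card A = g + m" by auto
      have "A \<inter> V \<in> ?MA" using splitA[OF A1(1,2)] exact[OF A1] by simp
      moreover have "A \<inter> W \<in> ?MB" using splitB[OF A1(1,2)] exact[OF A1] by simp
      ultimately have "(A \<inter> V, A \<inter> W) \<in> ?MA \<times> ?MB" by simp
      moreover have "A = (\<lambda>(A,B). A \<union> B) (A \<inter> V, A \<inter> W)" using A1(1) by auto
      ultimately show "A \<in> (\<lambda>(A,B). A \<union> B) ` (?MA \<times> ?MB)"
        by (rule rev_image_eqI)
    qed
  next
    show "(\<lambda>(A,B). A \<union> B) ` (?MA \<times> ?MB) \<subseteq> ?M"
    proof
      fix C assume "C \<in> (\<lambda>(A,B). A \<union> B) ` (?MA \<times> ?MB)"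
      then obtain A B where AB: "A \<in> ?MA" "B \<in> ?MB" "C = A \<union> B" by auto
      have "r \<in> A" using AB rin by auto
      then have d: "domset ?E (?V - {r}) C" using join AB by auto
      have fA: "finite A" using AB Vf finite_subset by auto
      have fB: "finite B" using AB Wf finite_subset by auto
      have "A \<inter> B = {}" using AB WV by auto
      then have "card C = g + m" using AB card_Un_disjoint[OF fA fB] by simp
      then show "C \<in> ?M" using d AB by auto
    qed
  qed
  have inj: "inj_on (\<lambda>(A,B). A \<union> B) (?MA \<times> ?MB)"
  proof (rule inj_onI)
    fix p q assume p: "p \<in> ?MA \<times> ?MB" and q: "q \<in> ?MA \<times> ?MB"
      and e: "(\<lambda>(A,B). A \<union> B) p = (\<lambda>(A,B). A \<union> B) q"
    obtain A1 B1 where p1: "p = (A1,B1)" by force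
    obtain A2 B2 where q1: "q = (A2,B2)" by force
    have s: "A1 \<subseteq> V" "B1 \<subseteq> W" "A2 \<subseteq> V" "B2 \<subseteq> W" using p q p1 q1 by auto
    have e2: "A1 \<union> B1 = A2 \<union> B2" using e p1 q1 by simp
    have "A1 = (A1 \<union> B1) \<inter> V" "A2 = (A2 \<union> B2) \<inter> V" using s WV by auto
    then have "A1 = A2" using e2 by simp
    moreover have "B1 = (A1 \<union> B1) \<inter> W" "B2 = (A2 \<union> B2) \<inter> W" using s WV by auto
    then have "B1 = B2" using e2 by simp
    ultimately show "p = q" using p1 q1 by simp
  qed
  have "card ?M = card (?MA \<times> ?MB)" using Meq card_image[OF inj] by simp
  also have "\<dots> = cnt * c" unfolding card_cartesian_product using c cB by simp
  finally have "card ?M = cnt * c" .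
  moreover have "r \<in> ?V" using r by simp
  moreover have "cnt * c > 0" using cntp cp by simp
  ultimately show ?thesis using sg' low' rin' unfolding Qinv_def by blast
qed



definition gV :: "nat \<Rightarrow> nat \<Rightarrow> nat set" where "gV n s = (\<lambda>j. n + j) ` {0..<s}"
definition gE :: "nat \<Rightarrow> nat \<Rightarrow> (nat \<Rightarrow> nat) \<Rightarrow> nat set set" where
  "gE n s p = (\<lambda>j. {n + j, n + p j}) ` {1..<s}"

lemma gadget_tree:
  assumes T: "is_tree V E" and r: "r \<in> V" and Vn: "\<forall>v\<in>V. v < n"
    and p: "\<forall>j\<in>{1..<s}. p j < j" and s: "1 \<le> s"
  shows "is_tree (V \<union> gV n s) (insert {r,n} (E \<union> gE n s p))"
proof -
  have "1 \<le> t \<longrightarrow> t \<le> s \<longrightarrow> is_tree (V \<union> gV n t) (insert {r,n} (E \<union> gE n t p))" for t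
  proof (induction t)
    case 0 then show ?case by simp
  next
    case (Suc t)
    show ?case
    proof (cases "t = 0")
      case True
      have "n \<notin> V" using Vn by auto
      from tree_add_leaf[OF T r this]
      show ?thesis using True by (simp add: gV_def gE_def)
    next
      case False
      show ?thesis
      proof (intro impI)
        assume "Suc t \<le> s"
        then have ts: "1 \<le> t" "t \<le> s" "t < s" using False by auto
        have IH: "is_tree (V \<union> gV n t) (insert {r,n} (E \<union> gE n t p))" using Suc.IH ts by blast
        have pt: "p t < t" using p ts by auto
        have u: "n + p t \<in> V \<union> gV n t" using pt by (auto simp: gV_def)
        have v: "n + t \<notin> V \<union> gV n t" using Vn by (auto simp: gV_def)
        have e1: "gV n (Suc t) = insert (n + t) (gV n t)" by (auto simp: gV_def)
        have e2: "gE n (Suc t) p = insert {n + p t, n + t} (gE n t p)"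
          using ts by (auto simp: gE_def atLeastLessThanSuc insert_commute)
        have "V \<union> gV n (Suc t) = insert (n + t) (V \<union> gV n t)" using e1 by auto
        moreover have "insert {r,n} (E \<union> gE n (Suc t) p) = insert {n + p t, n + t} (insert {r,n} (E \<union> gE n t p))"
          using e2 by auto
        ultimately show "is_tree (V \<union> gV n (Suc t)) (insert {r,n} (E \<union> gE n (Suc t) p))"
          using tree_add_leaf[OF IH u v] by simp
      qed
    qed
  qed
  then show ?thesis using s by blast
qed

lemma edge_shift: "{n + w, n + u} \<in> gE n s p \<longleftrightarrow> {w, u} \<in> gE 0 s p"
  by (auto simp: gE_def doubleton_eq_iff)

lemma domset_shift:
  "domset (gE n s p) ((\<lambda>j. n + j) ` S) ((\<lambda>j. n + j) ` B) \<longleftrightarrow> domset (gE 0 s p) S B"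
  by (auto simp: domset_def adj_def edge_shift)

lemma shift_Pow:
  assumes "B \<in> Pow (gV n s)"
  shows "\<exists>B0\<in>Pow {0..<s}. B = (\<lambda>j. n + j) ` B0"
proof
  let ?B0 = "(\<lambda>v. v - n) ` B"
  have "\<forall>v\<in>B. n \<le> v \<and> v < n + s" using assms by (auto simp: gV_def)
  then show "?B0 \<in> Pow {0..<s}" by auto
  have "(\<lambda>j. n + j) ` ?B0 = (\<lambda>v. n + (v - n)) ` B" by (simp add: image_image)
  also have "\<dots> = B" using assms by (force simp: gV_def image_iff)
  finally show "B = (\<lambda>j. n + j) ` ?B0" by simp
qed

lemma gV_minus: "gV n s - {n} = (\<lambda>j. n + j) ` ({0..<s} - {0})"
proof (intro set_eqI iffI)
  fix x assume "x \<in> gV n s - {n}"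
  then have "x - n \<in> {0..<s} - {0}" "x = n + (x - n)" by (auto simp: gV_def)
  then show "x \<in> (\<lambda>j. n + j) ` ({0..<s} - {0})" by blast
qed (auto simp: gV_def)

lemma Qinv_gadget:
  assumes Q: "Qinv V E r g cnt" and Vn: "\<forall>v\<in>V. v < n"
    and p: "\<forall>j\<in>{1..<s}. p j < j" and s: "1 \<le> s"
    and low0: "\<forall>B\<in>Pow {0..<s}. domset (gE 0 s p) ({0..<s} - {0}) B \<longrightarrow> m \<le> card B"
    and c0: "card {B\<in>Pow {0..<s}. domset (gE 0 s p) ({0..<s} - {0}) B \<and> card B = m} = c"
    and cp: "c > 0" and g': "g' = g + m" and cnt': "cnt' = cnt * c"
  shows "Qinv (V \<union> gV n s) (insert {r,n} (E \<union> gE n s p)) r g' cnt'"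
proof -
  let ?f = "\<lambda>j::nat. n + j"
  have injf: "inj ?f" by (auto intro: injI)
  have Wf: "finite (gV n s)" by (simp add: gV_def)
  have WV: "gV n s \<inter> V = {}" using Vn by (auto simp: gV_def)
  have xW: "n \<in> gV n s" using s by (auto simp: gV_def intro: image_eqI[where x=0])
  have F: "\<forall>e\<in>gE n s p. e \<subseteq> gV n s \<and> card e = 2"
  proof
    fix e assume "e \<in> gE n s p"
    then obtain j where j: "j \<in> {1..<s}" "e = {n + j, n + p j}" by (auto simp: gE_def)
    have "p j < j" using p j by auto
    then show "e \<subseteq> gV n s \<and> card e = 2" using j by (auto simp: gV_def)
  qed
  have lowB: "\<forall>B\<in>Pow (gV n s). domset (gE n s p) (gV n s - {n}) B \<longrightarrow> m \<le> card B"
  proof (intro ballI impI)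
    fix B assume B: "B \<in> Pow (gV n s)" and d: "domset (gE n s p) (gV n s - {n}) B"
    obtain B0 where B0: "B0 \<in> Pow {0..<s}" "B = ?f ` B0" using shift_Pow[OF B] by blast
    have "domset (gE 0 s p) ({0..<s} - {0}) B0" using d B0 domset_shift gV_minus by metis
    then have "m \<le> card B0" using low0 B0 by blast
    moreover have "card B = card B0" using B0 card_image injf by (metis inj_on_subset subset_UNIV)
    ultimately show "m \<le> card B" by simp
  qed
  let ?MZ = "{B\<in>Pow {0..<s}. domset (gE 0 s p) ({0..<s} - {0}) B \<and> card B = m}"
  let ?M = "{B\<in>Pow (gV n s). domset (gE n s p) (gV n s - {n}) B \<and> card B = m}"
  have cardf: "card (?f ` B0) = card B0" for B0 using injf card_image by (metis inj_on_subset subset_UNIV)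
  have Meq: "?M = image ?f ` ?MZ"
  proof (intro set_eqI iffI)
    fix B assume B: "B \<in> ?M"
    then have Bp: "B \<in> Pow (gV n s)" by simp
    obtain B0 where B0: "B0 \<in> Pow {0..<s}" "B = ?f ` B0" using shift_Pow[OF Bp] by blast
    have "domset (gE 0 s p) ({0..<s} - {0}) B0" using B B0 domset_shift gV_minus by (metis (no_types, lifting) mem_Collect_eq)
    moreover have "card B0 = m" using B B0 cardf by simp
    ultimately have "B0 \<in> ?MZ" using B0 by simp
    then show "B \<in> image ?f ` ?MZ" using B0 by blast
  next
    fix B assume "B \<in> image ?f ` ?MZ"
    then obtain B0 where B0: "B0 \<in> ?MZ" "B = ?f ` B0" by blast
    have "?f ` B0 \<in> Pow (gV n s)" using B0 by (auto simp: gV_def)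
    moreover have "domset (gE n s p) (gV n s - {n}) (?f ` B0)" using B0 domset_shift gV_minus by (metis (no_types, lifting) mem_Collect_eq)
    moreover have "card (?f ` B0) = m" using B0 cardf by simp
    ultimately have "?f ` B0 \<in> ?M" by blast
    then show "B \<in> ?M" using B0(2) by simp
  qed
  have "inj_on (image ?f) (Pow UNIV)" using inj_on_image_Pow[of ?f UNIV] injf by blast
  then have "inj_on (image ?f) ?MZ" by (rule inj_on_subset) simp
  then have "card (image ?f ` ?MZ) = card ?MZ" by (rule card_image)
  then have cB: "card ?M = c" unfolding Meq c0 .
  have "Qinv (V \<union> gV n s) (insert {r,n} (E \<union> gE n s p)) r (g + m) (cnt * c)"
    by (rule Qinv_attach[OF Q Wf WV xW F lowB cB cp])
  then show ?thesis unfolding g' cnt' .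
qed



definition lp :: "nat \<Rightarrow> nat" where "lp j = j - 1"
definition sp :: "nat \<Rightarrow> nat" where "sp j = [0,0,1,2,2,3,4] ! j"

lemma leg_low: "\<forall>B\<in>Pow {0..<5}. domset (gE 0 5 lp) ({0..<5} - {0}) B \<longrightarrow> 2 \<le> card B"
  by code_simp
lemma leg_cnt: "card {B\<in>Pow {0..<5}. domset (gE 0 5 lp) ({0..<5} - {0}) B \<and> card B = 2} = 5"
  by code_simp
lemma sp_low: "\<forall>B\<in>Pow {0..<7}. domset (gE 0 7 sp) ({0..<7} - {0}) B \<longrightarrow> 3 \<le> card B"
  by code_simp
lemma sp_cnt: "card {B\<in>Pow {0..<7}. domset (gE 0 7 sp) ({0..<7} - {0}) B \<and> card B = 3} = 11"
  by code_simp
lemma lp_lt: "\<forall>j\<in>{1..<5}. lp j < j" by (auto simp: lp_def)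
lemma sp_lt: "\<forall>j\<in>{1..<7::nat}. sp j < j" by code_simp

lemma base_Q: "Qinv {0,1,2::nat} {{0,1},{0,2}} 0 1 1"
proof -
  have "simple_graph {0,1,2::nat} {{0,1},{0,2}}" by (simp add: simple_graph_def)
  moreover have "(0::nat) \<in> {0,1,2}" by simp
  moreover have "\<forall>A\<in>Pow {0,1,2::nat}. domset {{0,1},{0,2}} ({0,1,2} - {0}) A \<longrightarrow> 1 \<le> card A"
    by code_simp
  moreover have "\<forall>A\<in>Pow {0,1,2::nat}. domset {{0,1},{0,2}} ({0,1,2} - {0}) A \<and> card A = 1 \<longrightarrow> 0 \<in> A"
    by code_simp
  moreover have "card {A\<in>Pow {0,1,2::nat}. domset {{0,1},{0,2}} ({0,1,2} - {0}) A \<and> card A = 1} = 1"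
    by code_simp
  ultimately show ?thesis unfolding Qinv_def by blast
qed

lemma base_tree: "is_tree {0,1,2::nat} {{0,1},{0,2}}"
proof -
  have "is_tree (insert 1 {0::nat}) (insert {0,1} {})"
    by (rule tree_add_leaf[OF tree_single]) auto
  then have "is_tree (insert 2 (insert 1 {0::nat})) (insert {0,2} (insert {0,1} {}))"
    by (rule tree_add_leaf) auto
  then show ?thesis by (simp add: insert_commute)
qed

primrec bV :: "nat \<Rightarrow> nat set" where
  "bV 0 = {0,1,2}"
| "bV (Suc k) = bV k \<union> gV (3 + 5 * k) 5"

primrec bE :: "nat \<Rightarrow> nat set set" where
  "bE 0 = {{0,1},{0,2}}"
| "bE (Suc k) = insert {0, 3 + 5 * k} (bE k \<union> gE (3 + 5 * k) 5 lp)"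

lemma build:
  "is_tree (bV k) (bE k) \<and> (\<forall>v\<in>bV k. v < 3 + 5 * k) \<and> 0 \<in> bV k \<and> Qinv (bV k) (bE k) 0 (1 + 2 * k) (5 ^ k)"
proof (induction k)
  case 0 then show ?case using base_tree base_Q by simp
next
  case (Suc k)
  have T: "is_tree (bV k) (bE k)" and B: "\<forall>v\<in>bV k. v < 3 + 5 * k" and z: "0 \<in> bV k"
    and Q: "Qinv (bV k) (bE k) 0 (1 + 2 * k) (5 ^ k)" using Suc by auto
  have "is_tree (bV (Suc k)) (bE (Suc k))"
    using gadget_tree[OF T z B lp_lt] by simp
  moreover have "\<forall>v\<in>bV (Suc k). v < 3 + 5 * Suc k" using B by (auto simp: gV_def)
  moreover have "0 \<in> bV (Suc k)" using z by simp
  moreover have "Qinv (bV (Suc k)) (bE (Suc k)) 0 (1 + 2 * Suc k) (5 ^ Suc k)"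
    unfolding bV.simps bE.simps
    by (rule Qinv_gadget[OF Q B lp_lt _ leg_low leg_cnt]) auto
  ultimately show ?case by blast
qed

lemma build_even:
  "is_tree (bV k \<union> gV (3 + 5 * k) 7) (insert {0, 3 + 5 * k} (bE k \<union> gE (3 + 5 * k) 7 sp)) \<and>
   Qinv (bV k \<union> gV (3 + 5 * k) 7) (insert {0, 3 + 5 * k} (bE k \<union> gE (3 + 5 * k) 7 sp)) 0 (2 * k + 4) (11 * 5 ^ k)"
proof -
  have T: "is_tree (bV k) (bE k)" and B: "\<forall>v\<in>bV k. v < 3 + 5 * k" and z: "0 \<in> bV k"
    and Q: "Qinv (bV k) (bE k) 0 (1 + 2 * k) (5 ^ k)" using build by auto
  show ?thesis
    using gadget_tree[OF T z B sp_lt] Qinv_gadget[OF Q B sp_lt _ sp_low sp_cnt, of "2 * k + 4" "11 * 5 ^ k"] by simp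
qed

lemma P4:
  "is_tree {0,1,2,3::nat} {{0,1},{1,2},{2,3}} \<and> domination_number {0,1,2,3::nat} {{0,1},{1,2},{2,3}} = 2
   \<and> num_min_dominating {0,1,2,3::nat} {{0,1},{1,2},{2,3}} = 4"
proof -
  have "is_tree (insert 1 {0::nat}) (insert {0,1} {})"
    by (rule tree_add_leaf[OF tree_single]) auto
  then have "is_tree (insert 2 (insert 1 {0::nat})) (insert {1,2} (insert {0,1} {}))"
    by (rule tree_add_leaf) auto
  then have "is_tree (insert 3 (insert 2 (insert 1 {0::nat}))) (insert {2,3} (insert {1,2} (insert {0,1} {})))"
    by (rule tree_add_leaf) auto
  then have t: "is_tree {0,1,2,3::nat} {{0,1},{1,2},{2,3}}" by (simp add: insert_commute)
  have low: "\<forall>D\<in>Pow {0,1,2,3::nat}. dominating {0,1,2,3} {{0,1},{1,2},{2,3}} D \<longrightarrow> 2 \<le> card D"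
    by code_simp
  have ex: "dominating {0,1,2,3::nat} {{0,1},{1,2},{2,3}} {1,2}"
    by code_simp
  have d: "domination_number {0,1,2,3::nat} {{0,1},{1,2},{2,3}} = 2"
    by (rule dom_number_by[OF low]) (use ex in force)
  have eq: "{D. dominating {0,1,2,3::nat} {{0,1},{1,2},{2,3}} D \<and> card D = 2}
      = {D\<in>Pow {0,1,2,3::nat}. dominating {0,1,2,3::nat} {{0,1},{1,2},{2,3}} D \<and> card D = 2}"
    by (auto simp: dominating_def)
  have c: "card {D\<in>Pow {0,1,2,3::nat}. dominating {0,1,2,3::nat} {{0,1},{1,2},{2,3}} D \<and> card D = 2} = 4"
    by code_simp
  show ?thesis using t d eq c by (simp add: num_min_dominating_def)
qed



lemma sqrt5_lt: "sqrt 5 < (5/2::real)"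
  by (rule real_less_lsqrt) (simp_all add: power2_eq_square)

theorem mainTheorem3:
  fixes \<gamma> :: nat
  assumes "\<gamma> \<ge> 1"
  shows "\<exists>(V :: nat set) (E :: nat set set).
           is_tree V E \<and> domination_number V E = \<gamma> \<and>
           real (num_min_dominating V E) > 2 / 5 * sqrt 5 ^ \<gamma>"
proof -
  have s2: "sqrt 5 ^ 2 = (5::real)" by simp
  have pw: "sqrt 5 ^ (2 * j) = (5::real) ^ j" for j by (simp add: power_mult)
  have "\<exists>k. \<gamma> = 2 * k + 1 \<or> \<gamma> = 2 \<or> \<gamma> = 2 * k + 4"
    using assms by presburger
  then obtain k where k: "\<gamma> = 2 * k + 1 \<or> \<gamma> = 2 \<or> \<gamma> = 2 * k + 4" by blast
  then show ?thesis
  proof (elim disjE)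
    assume g: "\<gamma> = 2 * k + 1"
    have T: "is_tree (bV k) (bE k)" and Q: "Qinv (bV k) (bE k) 0 (1 + 2 * k) (5 ^ k)"
      using build by auto
    have R: "domination_number (bV k) (bE k) = 1 + 2 * k \<and> num_min_dominating (bV k) (bE k) = 5 ^ k"
      using Qinv_result[OF Q] .
    have "2 / 5 * sqrt 5 ^ \<gamma> = (2 / 5 * sqrt 5) * (5::real) ^ k"
      using g pw by (simp add: power_add mult.commute)
    also have "\<dots> < 1 * 5 ^ k"
      using sqrt5_lt by (intro mult_strict_right_mono) auto
    finally have "2 / 5 * sqrt 5 ^ \<gamma> < real (5 ^ k)" by simp
    then show ?thesis using T R g by (intro exI[of _ "bV k"] exI[of _ "bE k"]) simp
  next
    assume g: "\<gamma> = 2"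
    show ?thesis using P4 g by (intro exI[of _ "{0,1,2,3}"] exI[of _ "{{0,1},{1,2},{2,3}}"]) simp
  next
    assume g: "\<gamma> = 2 * k + 4"
    let ?V = "bV k \<union> gV (3 + 5 * k) 7" and ?E = "insert {0, 3 + 5 * k} (bE k \<union> gE (3 + 5 * k) 7 sp)"
    have T: "is_tree ?V ?E" and Q: "Qinv ?V ?E 0 (2 * k + 4) (11 * 5 ^ k)"
      using build_even by auto
    have R: "domination_number ?V ?E = 2 * k + 4 \<and> num_min_dominating ?V ?E = 11 * 5 ^ k"
      using Qinv_result[OF Q] .
    have "2 / 5 * sqrt 5 ^ \<gamma> = 2 / 5 * (5::real) ^ (k + 2)"
    proof -
      have "\<gamma> = 2 * (k + 2)" using g by simp
      then show ?thesis using pw[of "k+2"] by simp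
    qed
    also have "\<dots> = 10 * 5 ^ k" by simp
    also have "\<dots> < 11 * (5::real) ^ k" by simp
    finally have "2 / 5 * sqrt 5 ^ \<gamma> < real (11 * 5 ^ k)" by simp
    then show ?thesis using T R g by (intro exI[of _ ?V] exI[of _ ?E]) simp
  qed
qed

end
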